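(* Let $\mathcal{A}=\{\mathbf{A},\mathbf{B},\mathbf{C},\mathbf{D}\}$, let $\mathcal{R}^\dagger$ be the symmetric relation on $\mathcal{A}$ whose related pairs are exactly $\{\mathbf{A},\mathbf{B}\}$, $\{\mathbf{B},\mathbf{D}\}$, $\{\mathbf{D},\mathbf{C}\}$, and let $\mathcal{H}$ be the base graph on $\{1,\dots,n\}$ defined as follows: if $n$ is even, $\mathcal{H}$ has edges $\{\sigma(i),\sigma(i+1)\}$, $i=1,\dots,n$ (indices modulo $n$), for some permutation $\sigma$ of $\{1,\dots,n\}$; if $n$ is odd, for a fixed vertex $u$ and a bijection $\sigma$ from $\{1,\dots,n-1\}$ onto $\{1,\dots,n\}\setminus\{u\}$, $\mathcal{H}$ has edges $\{\sigma(i),\sigma(i+1)\}$, $i=1,\dots,n-1$ (indices modulo $n-1$), and $u$ is isolated. Let $\mu_+=\frac{1+\sqrt5}{2}$ and $\mu_-=\frac{1-\sqrt5}{2}$. Then there exist at least $(\sqrt2)^{n-1}$ shapes $S$ (with respect to $\mathcal{H}$ and $\mathcal{R}^\dagger$) such that the number of sequences $v\in\mathcal{A}^n$ with $\mathcal{H}_{\mathcal{R}^\dagger}(v)=S$ is at least $2(\mu_+^n+\mu_-^n)$.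
   Context: For a sequence $v=(x_1,\dots,x_n)\in\mathcal{A}^n$, its shape $\mathcal{H}_{\mathcal{R}^\dagger}(v)$ is the graph with vertex set $\{1,\dots,n\}$ and edge set $\{\{i,k\}\in E_{\mathcal{H}}:(x_i,x_k)\in\mathcal{R}^\dagger\}$. A graph $S$ on $\{1,\dots,n\}$ is a shape if $S=\mathcal{H}_{\mathcal{R}^\dagger}(v)$ for some $v\in\mathcal{A}^n$; the sequences $v$ with $\mathcal{H}_{\mathcal{R}^\dagger}(v)=S$ are said to fold into $S$. *)

theory Defs
  imports Complex_Main "HOL-Library.FuncSet"
begin

datatype letter = LA | LB | LC | LD

fun Rdag :: "letter \<Rightarrow> letter \<Rightarrow> bool" where
  "Rdag LA LB = True"
| "Rdag LB LA = True"
| "Rdag LB LD = True"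
| "Rdag LD LB = True"
| "Rdag LD LC = True"
| "Rdag LC LD = True"
| "Rdag _ _ = False"

definition cycle_edges :: "nat \<Rightarrow> (nat \<Rightarrow> nat) \<Rightarrow> nat set set" where
  "cycle_edges m \<sigma> = {{\<sigma> i, \<sigma> (i mod m + 1)} | i. i \<in> {1..m}}"

definition seqs :: "nat \<Rightarrow> (nat \<Rightarrow> letter) set" where
  "seqs n = ({1..n} \<rightarrow>\<^sub>E (UNIV :: letter set))"

text \<open>The shape of v w.r.t. base graph (edge set) H: vertex set {1..n} is fixed,
  so a shape is represented by its edge set.\<close>
definition shape_of :: "nat set set \<Rightarrow> (nat \<Rightarrow> letter) \<Rightarrow> nat set set" where
  "shape_of H v = {e \<in> H. \<exists>i k. e = {i, k} \<and> Rdag (v i) (v k)}"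

definition shapes :: "nat \<Rightarrow> nat set set \<Rightarrow> nat set set set" where
  "shapes n H = {S. \<exists>v \<in> seqs n. shape_of H v = S}"

definition num_folding :: "nat \<Rightarrow> nat set set \<Rightarrow> nat set set \<Rightarrow> nat" where
  "num_folding n H S = card {v \<in> seqs n. shape_of H v = S}"

end

theory Submission
  imports Defs
begin

fun valid :: "bool list \<Rightarrow> bool" where
  "valid [] = True"
| "valid [x] = True"
| "valid (x # y # zs) = (\<not>(x \<and> y) \<and> valid (y # zs))"

definition lin :: "nat \<Rightarrow> bool list set" where
  "lin j = {xs. length xs = j \<and> valid xs}"

definition cyc :: "nat \<Rightarrow> bool list set" where
  "cyc m = {xs. length xs = m \<and> valid xs \<and> \<not>(hd xs \<and> last xs)}"

fun FF :: "nat \<Rightarrow> nat" where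
  "FF 0 = 1" | "FF (Suc 0) = 2" | "FF (Suc (Suc j)) = FF (Suc j) + FF j"

fun LL :: "nat \<Rightarrow> nat" where
  "LL 0 = 2" | "LL (Suc 0) = 1" | "LL (Suc (Suc j)) = LL (Suc j) + LL j"

lemma valid_False_Cons[simp]: "valid (False # ys) = valid ys"
  by (cases ys) auto

lemma valid_snoc_False: "valid (xs @ [False]) = valid xs"
  by (induction xs rule: valid.induct) auto

lemma valid_nth: "valid xs \<Longrightarrow> Suc j < length xs \<Longrightarrow> \<not>(xs!j \<and> xs!Suc j)"
  by (induction xs arbitrary: j rule: valid.induct) (auto simp: nth_Cons split: nat.splits)

lemma finite_lin: "finite (lin j)"
proof -
  have "lin j \<subseteq> {xs. set xs \<subseteq> UNIV \<and> length xs = j}" by (auto simp: lin_def)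
  thus ?thesis using finite_lists_length_eq[of "UNIV::bool set" j] by (auto intro: finite_subset)
qed

lemma finite_cyc: "finite (cyc j)"
proof -
  have "cyc j \<subseteq> {xs. set xs \<subseteq> UNIV \<and> length xs = j}" by (auto simp: cyc_def)
  thus ?thesis using finite_lists_length_eq[of "UNIV::bool set" j] by (auto intro: finite_subset)
qed

lemma lin0: "lin 0 = {[]}" by (auto simp: lin_def)
lemma lin1: "lin (Suc 0) = {[False],[True]}"
  by (auto simp: lin_def length_Suc_conv)

lemma lin_SS: "lin (Suc (Suc j)) = Cons False ` lin (Suc j) \<union> (\<lambda>ys. True # False # ys) ` lin j"
proof
  show "lin (Suc (Suc j)) \<subseteq> Cons False ` lin (Suc j) \<union> (\<lambda>ys. True # False # ys) ` lin j"
  proof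
    fix xs assume "xs \<in> lin (Suc (Suc j))"
    then obtain x y zs where xs: "xs = x # y # zs" "length zs = j" "valid (x # y # zs)"
      by (auto simp: lin_def length_Suc_conv)
    show "xs \<in> Cons False ` lin (Suc j) \<union> (\<lambda>ys. True # False # ys) ` lin j"
    proof (cases x)
      case True
      then have "y = False" using xs by auto
      then show ?thesis using xs True by (auto simp: lin_def)
    next
      case False
      then show ?thesis using xs by (auto simp: lin_def)
    qed
  qed
  show "Cons False ` lin (Suc j) \<union> (\<lambda>ys. True # False # ys) ` lin j \<subseteq> lin (Suc (Suc j))"
    by (auto simp: lin_def)
qed

lemma card_lin: "card (lin j) = FF j"
proof (induction j rule: FF.induct)
  case 1 then show ?case by (simp add: lin0)
next
  case 2 then show ?case by (simp add: lin1)
next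
  case (3 j)
  have d: "Cons False ` lin (Suc j) \<inter> (\<lambda>ys. True # False # ys) ` lin j = {}" by auto
  have "card (lin (Suc (Suc j))) = card (Cons False ` lin (Suc j)) + card ((\<lambda>ys. True # False # ys) ` lin j)"
    unfolding lin_SS by (rule card_Un_disjoint) (auto simp: finite_lin d)
  also have "\<dots> = card (lin (Suc j)) + card (lin j)"
    by (subst card_image, simp add: inj_on_def)+ simp
  finally show ?case using 3 by simp
qed

lemma LL_FF: "LL (Suc (Suc (Suc j))) = FF (Suc (Suc j)) + FF j"
  by (induction j rule: FF.induct) simp_all

lemma cyc_ge: assumes "m \<ge> 2" shows "LL m \<le> card (cyc m)"
proof (cases "m = 2")
  case True
  have "{[False,False],[False,True],[True,False]} \<subseteq> cyc m" using True by (auto simp: cyc_def)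
  from card_mono[OF finite_cyc this] show ?thesis using True by (simp add: numeral_eq_Suc)
next
  case False
  then obtain j where j: "m = Suc (Suc (Suc j))" using assms
    by (metis add_2_eq_Suc le_Suc_ex le_antisym not_less_eq_eq)
  let ?A = "Cons False ` lin (Suc (Suc j))"
  let ?B = "(\<lambda>ws. True # False # ws @ [False]) ` lin j"
  have sub: "?A \<union> ?B \<subseteq> cyc m" using j by (auto simp: lin_def cyc_def valid_snoc_False)
  have d: "?A \<inter> ?B = {}" by auto
  have "card (?A \<union> ?B) = card ?A + card ?B"
    by (rule card_Un_disjoint) (auto simp: finite_lin d)
  also have "\<dots> = card (lin (Suc (Suc j))) + card (lin j)"
    by (subst card_image, simp add: inj_on_def)+ simp
  also have "\<dots> = FF (Suc (Suc j)) + FF j" by (simp only: card_lin)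
  also have "\<dots> = LL m" by (simp only: j LL_FF)
  finally show ?thesis using card_mono[OF finite_cyc sub] by simp
qed

lemma phi_sq: "((1 + sqrt 5) / 2) ^ 2 = (1 + sqrt 5) / 2 + (1::real)"
  by (simp add: power2_eq_square field_simps)
lemma psi_sq: "((1 - sqrt 5) / 2) ^ 2 = (1 - sqrt 5) / 2 + (1::real)"
  by (simp add: power2_eq_square field_simps)

lemma pow_rec: "(a::real) ^ 2 = a + 1 \<Longrightarrow> a ^ Suc (Suc n) = a ^ Suc n + a ^ n"
proof -
  assume h: "a ^ 2 = a + 1"
  have "a ^ Suc (Suc n) = a ^ 2 * a ^ n" by (simp add: power_add[symmetric])
  also have "\<dots> = a ^ Suc n + a ^ n" using h by (simp add: algebra_simps)
  finally show ?thesis .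
qed

lemma LL_real: "real (LL n) = ((1 + sqrt 5) / 2) ^ n + ((1 - sqrt 5) / 2) ^ n"
proof (induction n rule: LL.induct)
  case 1 then show ?case by simp
next
  case 2 then show ?case by (simp add: field_simps)
next
  case (3 j)
  have "real (LL (Suc (Suc j))) = real (LL (Suc j)) + real (LL j)" by simp
  also have "\<dots> = (((1 + sqrt 5) / 2) ^ Suc j + ((1 - sqrt 5) / 2) ^ Suc j)
     + (((1 + sqrt 5) / 2) ^ j + ((1 - sqrt 5) / 2) ^ j)" by (simp only: 3)
  also have "\<dots> = ((1 + sqrt 5) / 2) ^ Suc (Suc j) + ((1 - sqrt 5) / 2) ^ Suc (Suc j)"
    unfolding pow_rec[OF phi_sq] pow_rec[OF psi_sq] by linarith
  finally show ?case .
qed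

lemma LL_le4: "LL (Suc m) \<le> 4 * LL m"
proof (cases m)
  case 0 then show ?thesis by simp
next
  case (Suc j)
  have "LL j \<le> 2 * LL (Suc j)" by (cases j rule: LL.cases) auto
  then show ?thesis using Suc by simp
qed


definition rf :: "bool \<Rightarrow> letter \<Rightarrow> letter" where
  "rf x a = (if x then (case a of LA \<Rightarrow> LC | LC \<Rightarrow> LA | LB \<Rightarrow> LD | LD \<Rightarrow> LB) else a)"

definition base :: "bool \<Rightarrow> bool \<Rightarrow> nat \<Rightarrow> letter" where
  "base p s i = (if odd i = p then (if s then LA else LD) else (if s then LC else LB))"

lemma Rdag_sym: "Rdag a b = Rdag b a" by (cases a; cases b) auto

lemma rf_rel: "Rdag a c \<Longrightarrow> Rdag (rf x a) (rf y c) = (x = y)"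
  by (cases a; cases c; cases x; cases y) (auto simp: rf_def)

lemma base_rel: "odd i \<noteq> odd i' \<Longrightarrow> \<not>(s \<and> s') \<Longrightarrow> Rdag (base p s i) (base p s' i')"
  by (cases p; cases s; cases s'; cases "odd i") (auto simp: base_def)

lemma rf_inj: "rf x a = rf x b \<Longrightarrow> a = b"
  by (cases a; cases b; cases x) (auto simp: rf_def)

lemma base_inj: "base p s i = base p' s' i \<Longrightarrow> p = p' \<and> s = s'"
  by (cases p; cases p'; cases s; cases s'; cases "odd i") (auto simp: base_def)

lemma UNIV_letter: "(UNIV :: letter set) = {LA, LB, LC, LD}"
  by (auto intro: letter.exhaust)

lemma finite_letter: "finite (UNIV :: letter set)"
  by (simp add: UNIV_letter)

lemma card_letter: "card (UNIV :: letter set) = 4"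
  by (simp add: UNIV_letter)

lemma core:
  fixes n m :: nat and \<sigma> :: "nat \<Rightarrow> nat" and U :: "nat set" and J :: "nat set"
  assumes m2: "m \<ge> 2" and ev: "even m" and U: "U \<subseteq> {1..n}"
    and bij: "bij_betw \<sigma> {1..m} ({1..n} - U)"
    and H: "H = cycle_edges m \<sigma>"
  shows "2 * card (cyc m) * 4 ^ card U \<le> num_folding n H
           {e \<in> H. \<exists>a b. e = {a,b} \<and> (a \<in> X \<longleftrightarrow> b \<in> X)}"
proof -
  define S where "S = {e \<in> H. \<exists>a b. e = {a,b} \<and> (a \<in> X \<longleftrightarrow> b \<in> X)}"
  have inj: "inj_on \<sigma> {1..m}" and img: "\<sigma> ` {1..m} = {1..n} - U"
    using bij by (auto simp: bij_betw_def)
  define w where "w p b i = rf (\<sigma> i \<in> X) (base p (b ! (i - 1)) i)" for p b i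
  define \<Phi> where "\<Phi> = (\<lambda>(p::bool, b::bool list, c::nat \<Rightarrow> letter).
     (\<lambda>x. if x \<in> \<sigma> ` {1..m} then w p b (the_inv_into {1..m} \<sigma> x) else c x))"
  define D where "D = (UNIV :: bool set) \<times> cyc m \<times> (U \<rightarrow>\<^sub>E (UNIV :: letter set))"
  have Phi_sig: "\<Phi> (p, b, c) (\<sigma> i) = w p b i" if "i \<in> {1..m}" for p b c i
    using that inj by (simp add: \<Phi>_def the_inv_into_f_f)
  have Phi_out: "\<Phi> (p, b, c) x = c x" if "x \<notin> \<sigma> ` {1..m}" for p b c x
    using that by (simp add: \<Phi>_def)
  have finU: "finite U" using U finite_subset by blast
  have s1: "\<Phi> t \<in> seqs n" if "t \<in> D" for t
  proof -
    obtain p b c where t: "t = (p, b, c)" by (cases t) auto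
    have c: "c \<in> U \<rightarrow>\<^sub>E UNIV" using that t by (simp add: D_def)
    show ?thesis unfolding seqs_def t
    proof (rule PiE_I)
      fix x assume "x \<notin> {1..n}"
      then have "x \<notin> \<sigma> ` {1..m}" "x \<notin> U" using img U by auto
      then show "\<Phi> (p, b, c) x = undefined" using c Phi_out by auto
    qed simp
  qed
  have s2: "shape_of H (\<Phi> t) = S" if "t \<in> D" for t
  proof -
    obtain p b c where t: "t = (p, b, c)" by (cases t) auto
    have b: "b \<in> cyc m" using that t by (simp add: D_def)
    then have lb: "length b = m" and vb: "valid b" and hl: "\<not>(hd b \<and> last b)"
      by (auto simp: cyc_def)
    have bne: "b \<noteq> []" using lb m2 by auto
    define v where "v = \<Phi> t"
    have key: "Rdag (v (\<sigma> i)) (v (\<sigma> (i mod m + 1))) \<longleftrightarrow> (\<sigma> i \<in> X \<longleftrightarrow> \<sigma> (i mod m + 1) \<in> X)"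
      if i: "i \<in> {1..m}" for i
    proof -
      define i' where "i' = i mod m + 1"
      have "i mod m < m" using m2 by simp
      then have i': "i' \<in> {1..m}" by (auto simp: i'_def)
      have par: "odd i \<noteq> odd i'"
      proof (cases "i < m")
        case True then show ?thesis by (simp add: i'_def)
      next
        case False then have "i = m" using i by auto
        then show ?thesis using ev by (simp add: i'_def)
      qed
      have nb: "\<not>(b ! (i - 1) \<and> b ! (i' - 1))"
      proof (cases "i < m")
        case True
        then have "i' - 1 = Suc (i - 1)" using i by (simp add: i'_def)
        moreover have "Suc (i - 1) < length b" using True i lb by auto
        ultimately show ?thesis using valid_nth[OF vb] by metis
      next
        case False then have im: "i = m" using i by auto
        then have "i' = 1" by (simp add: i'_def)
        moreover have "b ! (i - 1) = last b" using im lb bne by (simp add: last_conv_nth)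
        moreover have "b ! 0 = hd b" using bne by (simp add: hd_conv_nth)
        ultimately show ?thesis using hl by auto
      qed
      have "Rdag (base p (b ! (i - 1)) i) (base p (b ! (i' - 1)) i')"
        by (rule base_rel[OF par nb])
      then show ?thesis
        using rf_rel Phi_sig[OF i] Phi_sig[OF i'] unfolding v_def t w_def i'_def[symmetric]
        by simp
    qed
    show ?thesis
    proof (rule set_eqI)
      fix e
      show "e \<in> shape_of H (\<Phi> t) \<longleftrightarrow> e \<in> S"
      proof (cases "e \<in> H")
        case False then show ?thesis by (simp add: shape_of_def S_def)
      next
        case True
        then obtain i where i: "i \<in> {1..m}" and e: "e = {\<sigma> i, \<sigma> (i mod m + 1)}"
          using H by (auto simp: cycle_edges_def)
        have k2: "Rdag (v a) (v c) \<longleftrightarrow> (a \<in> X \<longleftrightarrow> c \<in> X)" if "e = {a, c}" for a c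
        proof -
          have "(a = \<sigma> i \<and> c = \<sigma> (i mod m + 1)) \<or> (a = \<sigma> (i mod m + 1) \<and> c = \<sigma> i)"
            using that e by (auto simp: doubleton_eq_iff)
          then show ?thesis using key[OF i] Rdag_sym by blast
        qed
        show ?thesis
          unfolding shape_of_def S_def v_def[symmetric] using True k2 by auto
      qed
    qed
  qed
  have s3: "inj_on \<Phi> D"
  proof (rule inj_onI)
    fix t t' assume t: "t \<in> D" and t': "t' \<in> D" and eq: "\<Phi> t = \<Phi> t'"
    obtain p b c where tt: "t = (p, b, c)" by (cases t) auto
    obtain p' b' c' where tt': "t' = (p', b', c')" by (cases t') auto
    have bb: "length b = m" "length b' = m" using t t' tt tt' by (auto simp: D_def cyc_def)
    have cc: "c \<in> U \<rightarrow>\<^sub>E UNIV" "c' \<in> U \<rightarrow>\<^sub>E UNIV" using t t' tt tt' by (auto simp: D_def)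
    have wi: "p = p' \<and> b ! (i - 1) = b' ! (i - 1)" if i: "i \<in> {1..m}" for i
    proof -
      have "w p b i = w p' b' i" using Phi_sig[OF i] eq tt tt' by metis
      then show ?thesis unfolding w_def by (blast dest: rf_inj base_inj)
    qed
    have "p = p'" using wi[of 1] m2 by auto
    moreover have "b = b'"
    proof (rule nth_equalityI)
      show "length b = length b'" using bb by simp
      fix j assume "j < length b"
      then show "b ! j = b' ! j" using wi[of "Suc j"] bb by auto
    qed
    moreover have "c = c'"
    proof (rule PiE_ext[OF cc])
      fix x assume "x \<in> U"
      then have "x \<notin> \<sigma> ` {1..m}" using img by auto
      then show "c x = c' x" using eq tt tt' Phi_out by metis
    qed
    ultimately show "t = t'" using tt tt' by simp
  qed
  have s4: "card D = 2 * card (cyc m) * 4 ^ card U"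
    by (simp add: D_def card_cartesian_product card_PiE finU card_letter)
  have finS: "finite (seqs n)" unfolding seqs_def by (rule finite_PiE) (auto simp: finite_letter)
  have "\<Phi> ` D \<subseteq> {v \<in> seqs n. shape_of H v = S}" using s1 s2 by auto
  then have "card (\<Phi> ` D) \<le> num_folding n H S"
    unfolding num_folding_def by (rule card_mono[rotated]) (simp add: finS)
  then show ?thesis using s3 s4 by (simp add: card_image S_def)
qed


lemma LL_pos: "LL n > 0"
  by (induction n rule: LL.induct) auto

lemma family:
  fixes n m :: nat and \<sigma> :: "nat \<Rightarrow> nat" and U :: "nat set" and T :: real
  assumes m2: "m \<ge> 2" and ev: "even m" and U: "U \<subseteq> {1..n}"
    and bij: "bij_betw \<sigma> {1..m} ({1..n} - U)"
    and H: "H = cycle_edges m \<sigma>"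
    and T: "T \<le> real (2 * LL m * 4 ^ card U)"
  shows "2 ^ (m div 2) \<le> card {S \<in> shapes n H. T \<le> real (num_folding n H S)}"
proof -
  have inj: "inj_on \<sigma> {1..m}" using bij by (auto simp: bij_betw_def)
  define K where "K = {1..m div 2}"
  define X where "X J = \<sigma> ` ((\<lambda>j. 2*j) ` J)" for J :: "nat set"
  define Sf where "Sf J = {e \<in> H. \<exists>a b. e = {a,b} \<and> (a \<in> X J \<longleftrightarrow> b \<in> X J)}" for J
  have finS: "finite (seqs n)"
    unfolding seqs_def by (rule finite_PiE) (auto simp: finite_letter)
  have good: "Sf J \<in> {S \<in> shapes n H. T \<le> real (num_folding n H S)}" for J
  proof -
    have "2 * card (cyc m) * 4 ^ card U \<le> num_folding n H (Sf J)"
      unfolding Sf_def by (rule core[OF m2 ev U bij H])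
    moreover have "2 * LL m * 4 ^ card U \<le> 2 * card (cyc m) * 4 ^ card U"
      using cyc_ge[OF m2] by simp
    ultimately have nf: "2 * LL m * 4 ^ card U \<le> num_folding n H (Sf J)" by linarith
    have "0 < 2 * LL m * 4 ^ card U" using LL_pos by simp
    then have "card {v \<in> seqs n. shape_of H v = Sf J} > 0" using nf unfolding num_folding_def by linarith
    then have "{v \<in> seqs n. shape_of H v = Sf J} \<noteq> {}" by (metis card.empty less_irrefl)
    then have "Sf J \<in> shapes n H" by (auto simp: shapes_def)
    moreover have "T \<le> real (num_folding n H (Sf J))" using T nf
      by (meson of_nat_le_iff order_trans)
    ultimately show ?thesis by simp
  qed
  have sub: "J \<subseteq> J'" if J: "J \<subseteq> K" and J': "J' \<subseteq> K" and eq: "Sf J = Sf J'" for J J'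
  proof
    fix j assume jJ: "j \<in> J"
    show "j \<in> J'"
    proof (rule ccontr)
      assume nj: "j \<notin> J'"
      have "j \<in> {1..m div 2}" using jJ J by (auto simp: K_def)
      then have jK: "1 \<le> j" "2 * j \<le> m" using ev by auto
      have i1: "2 * j - 1 \<in> {1..m}" "2 * j \<in> {1..m}" using jK by auto
      have md: "(2 * j - 1) mod m + 1 = 2 * j" using jK by simp
      have eH: "{\<sigma> (2*j - 1), \<sigma> (2*j)} \<in> H"
        unfolding H cycle_edges_def using i1(1) md by (metis (mono_tags, lifting) mem_Collect_eq)
      have notodd: "\<sigma> (2*j - 1) \<notin> X JJ" if "JJ \<subseteq> K" for JJ
      proof
        assume "\<sigma> (2*j - 1) \<in> X JJ"
        then obtain j' where j': "j' \<in> JJ" "\<sigma> (2*j - 1) = \<sigma> (2*j')" by (auto simp: X_def)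
        have "j' \<in> {1..m div 2}" using j' that by (auto simp: K_def)
        then have "2*j' \<in> {1..m}" by auto
        then have "2*j - 1 = 2*j'" using inj_onD[OF inj j'(2) i1(1)] by simp
        then show False using jK by presburger
      qed
      have inX: "\<sigma> (2*j) \<in> X J" using jJ by (auto simp: X_def)
      have ninX: "\<sigma> (2*j) \<notin> X J'"
      proof
        assume "\<sigma> (2*j) \<in> X J'"
        then obtain j' where j': "j' \<in> J'" "\<sigma> (2*j) = \<sigma> (2*j')" by (auto simp: X_def)
        have "j' \<in> {1..m div 2}" using j' J' by (auto simp: K_def)
        then have "2*j' \<in> {1..m}" by auto
        then have "2*j = 2*j'" using inj_onD[OF inj j'(2) i1(2)] by simp
        then show False using j' nj by simp
      qed
      have "{\<sigma> (2*j - 1), \<sigma> (2*j)} \<in> Sf J'"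
        unfolding Sf_def using eH notodd[OF J'] ninX by blast
      moreover have "{\<sigma> (2*j - 1), \<sigma> (2*j)} \<notin> Sf J"
      proof
        assume "{\<sigma> (2*j - 1), \<sigma> (2*j)} \<in> Sf J"
        then obtain a b where ab: "{\<sigma> (2*j - 1), \<sigma> (2*j)} = {a,b}" "(a \<in> X J \<longleftrightarrow> b \<in> X J)"
          unfolding Sf_def by blast
        then have "(a = \<sigma> (2*j - 1) \<and> b = \<sigma> (2*j)) \<or> (a = \<sigma> (2*j) \<and> b = \<sigma> (2*j - 1))"
          by (auto simp: doubleton_eq_iff)
        then show False using ab(2) inX notodd[OF J] by blast
      qed
      ultimately show False using eq by simp
    qed
  qed
  have injS: "inj_on Sf (Pow K)"
  proof (rule inj_onI)
    fix x y assume "x \<in> Pow K" "y \<in> Pow K" "Sf x = Sf y"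
    then show "x = y" using sub[of x y] sub[of y x] by auto
  qed
  have fin: "finite {S \<in> shapes n H. T \<le> real (num_folding n H S)}"
  proof -
    have "shapes n H = shape_of H ` seqs n" by (auto simp: shapes_def)
    then have "finite (shapes n H)" using finS by simp
    then show ?thesis by simp
  qed
  have "Sf ` Pow K \<subseteq> {S \<in> shapes n H. T \<le> real (num_folding n H S)}" using good by blast
  from card_mono[OF fin this] have "card (Sf ` Pow K) \<le> card {S \<in> shapes n H. T \<le> real (num_folding n H S)}" .
  moreover have "card (Sf ` Pow K) = 2 ^ (m div 2)"
    using injS by (simp add: card_image card_Pow K_def)
  ultimately show ?thesis by simp
qed


lemma sqrt2_pow: "sqrt 2 ^ (2 * k) = (2::real) ^ k"
  by (simp add: power_mult)

theorem lemma2: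
  fixes n u :: nat and \<sigma> :: "nat \<Rightarrow> nat" and H :: "nat set set"
  assumes "n \<ge> 1"
  assumes "(even n \<and> bij_betw \<sigma> {1..n} {1..n} \<and> H = cycle_edges n \<sigma>)
         \<or> (odd n \<and> u \<in> {1..n} \<and> bij_betw \<sigma> {1..n-1} ({1..n} - {u})
             \<and> H = cycle_edges (n - 1) \<sigma>)"
  shows "real (card {S \<in> shapes n H.
             real (num_folding n H S) \<ge> 2 * (((1 + sqrt 5) / 2) ^ n + ((1 - sqrt 5) / 2) ^ n)})
         \<ge> sqrt 2 ^ (n - 1)"
proof -
  let ?T = "2 * (((1 + sqrt 5) / 2) ^ n + ((1 - sqrt 5) / 2) ^ n)"
  let ?G = "{S \<in> shapes n H. real (num_folding n H S) \<ge> ?T}"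
  have T: "?T = real (2 * LL n)" by (simp add: LL_real)
  have finS: "finite (seqs n)"
    unfolding seqs_def by (rule finite_PiE) (auto simp: finite_letter)
  have finG: "finite ?G"
  proof -
    have "shapes n H = shape_of H ` seqs n" by (auto simp: shapes_def)
    then have "finite (shapes n H)" using finS by simp
    then show ?thesis by simp
  qed
  show ?thesis
  proof (cases "even n")
    case True
    then have b: "bij_betw \<sigma> {1..n} ({1..n} - {})" and H: "H = cycle_edges n \<sigma>" using assms(2) by auto
    have n2: "n \<ge> 2" using True assms(1) by presburger
    have TT: "?T \<le> real (2 * LL n * 4 ^ card ({}::nat set))"
      by (simp only: T of_nat_le_iff) simp
    have "2 ^ (n div 2) \<le> card ?G"
      by (rule family[OF n2 True _ b H TT]) simp
    then have "real (2 ^ (n div 2)) \<le> real (card ?G)" by (rule of_nat_mono)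
    then have "(2::real) ^ (n div 2) \<le> real (card ?G)" by simp
    moreover have "sqrt 2 ^ (n - 1) \<le> sqrt 2 ^ n" by (rule power_increasing) auto
    moreover have "sqrt 2 ^ n = (2::real) ^ (n div 2)"
      using sqrt2_pow[of "n div 2"] True by simp
    ultimately show ?thesis by linarith
  next
    case odd: False
    then have u: "u \<in> {1..n}" and b: "bij_betw \<sigma> {1..n-1} ({1..n} - {u})"
      and H: "H = cycle_edges (n - 1) \<sigma>" using assms(2) by auto
    show ?thesis
    proof (cases "n = 1")
      case True
      have H0: "H = {}" using H True by (simp add: cycle_edges_def)
      have sh0: "shape_of H v = {}" for v by (simp add: H0 shape_of_def)
      then have eqs: "{v \<in> seqs n. shape_of H v = {}} = seqs n" by auto
      have cs: "card (seqs n) = 4" using True by (simp add: seqs_def card_PiE card_letter)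
      then have "seqs n \<noteq> {}" by auto
      then obtain v where "v \<in> seqs n" by blast
      then have "{} \<in> shapes n H" using sh0 unfolding shapes_def by blast
      moreover have "real (num_folding n H {}) \<ge> ?T"
        using True cs eqs by (simp add: num_folding_def field_simps)
      ultimately have "{} \<in> ?G" by simp
      then have "card ?G > 0" using finG card_gt_0_iff by blast
      then show ?thesis using True by simp
    next
      case False
      then have n3: "n - 1 \<ge> 2" using odd assms(1) by presburger
      have ev: "even (n - 1)" using odd assms(1) by simp
      have "LL n \<le> 4 * LL (n - 1)" using LL_le4[of "n - 1"] assms(1) by simp
      then have TT: "?T \<le> real (2 * LL (n - 1) * 4 ^ card {u})"
        by (simp only: T of_nat_le_iff) simp
      have "2 ^ ((n - 1) div 2) \<le> card ?G"
        by (rule family[OF n3 ev _ b H TT]) (use u in auto)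
      then have "real (2 ^ ((n - 1) div 2)) \<le> real (card ?G)" by (rule of_nat_mono)
      then have "(2::real) ^ ((n - 1) div 2) \<le> real (card ?G)" by simp
      moreover have "sqrt 2 ^ (n - 1) = (2::real) ^ ((n - 1) div 2)"
        using sqrt2_pow[of "(n - 1) div 2"] ev by simp
      ultimately show ?thesis by linarith
    qed
  qed
qed

end
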